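(* Let $n$ be even, $k>1$, and let $f=a_1+2a_2+\cdots+2^{k-1}a_k\in\mathcal{GB}_n^{2^k}$ with $a_1,\dots,a_k\in\mathcal{B}_n$ be gbent. Then for every $\mathbf{c}=(c_1,\dots,c_{k-1})\in\mathbb{F}_2^{k-1}$ the Boolean function $g_{\mathbf{c}}=c_1a_1\oplus c_2a_2\oplus\cdots\oplus c_{k-1}a_{k-1}\oplus a_k$ is bent.
   Context: $\mathcal{B}_n$: Boolean functions $\mathbb{F}_2^n\to\mathbb{F}_2$; $\mathcal{GB}_n^q$: functions $\mathbb{F}_2^n\to\mathbb{Z}_q$; every $f\in\mathcal{GB}_n^{2^k}$ is uniquely written as $f=\sum_{i=1}^k 2^{i-1}a_i$ (binary digits, $a_i\in\mathcal{B}_n$). $\mathcal{H}^{(q)}_f(\mathbf{u})=\sum_{\mathbf{x}}\zeta_q^{f(\mathbf{x})}(-1)^{\mathbf{u}\cdot\mathbf{x}}$ with $\zeta_q=e^{2\pi i/q}$; $f$ is gbent if $|\mathcal{H}^{(q)}_f(\mathbf{u})|=2^{n/2}$ for all $\mathbf{u}$. $g\in\mathcal{B}_n$ is bent if $|\sum_{\mathbf{x}}(-1)^{g(\mathbf{x})+\mathbf{u}\cdot\mathbf{x}}|=2^{n/2}$ for all $\mathbf{u}$. *)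

theory Defs
  imports "HOL-Analysis.Analysis"
begin

text \<open>Vectors of F_2^n are boolean lists of length n (True = 1).\<close>

definition vecs :: "nat \<Rightarrow> bool list set" where
  "vecs n = {xs. length xs = n}"

definition dotp :: "bool list \<Rightarrow> bool list \<Rightarrow> bool" where
  "dotp u x = odd (card {i. i < length x \<and> u ! i \<and> x ! i})"

definition sgn2 :: "bool \<Rightarrow> complex" where
  "sgn2 b = (if b then -1 else 1)"

definition zeta :: "nat \<Rightarrow> complex" where
  "zeta q = cis (2 * pi / real q)"

definition gwht :: "nat \<Rightarrow> nat \<Rightarrow> (bool list \<Rightarrow> nat) \<Rightarrow> bool list \<Rightarrow> complex" where
  "gwht n q f u = (\<Sum>x\<in>vecs n. zeta q ^ (f x mod q) * sgn2 (dotp u x))"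

definition gbent :: "nat \<Rightarrow> nat \<Rightarrow> (bool list \<Rightarrow> nat) \<Rightarrow> bool" where
  "gbent n q f \<longleftrightarrow> (\<forall>u\<in>vecs n. cmod (gwht n q f u) = 2 powr (real n / 2))"

definition wht :: "nat \<Rightarrow> (bool list \<Rightarrow> bool) \<Rightarrow> bool list \<Rightarrow> complex" where
  "wht n g u = (\<Sum>x\<in>vecs n. sgn2 (g x \<noteq> dotp u x))"

definition bent :: "nat \<Rightarrow> (bool list \<Rightarrow> bool) \<Rightarrow> bool" where
  "bent n g \<longleftrightarrow> (\<forall>u\<in>vecs n. cmod (wht n g u) = 2 powr (real n / 2))"

definition gfun :: "nat \<Rightarrow> (nat \<Rightarrow> bool list \<Rightarrow> bool) \<Rightarrow> bool list \<Rightarrow> nat" where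
  "gfun k a x = (\<Sum>i=1..k. 2 ^ (i - 1) * (if a i x then 1 else 0))"

definition gc :: "nat \<Rightarrow> (nat \<Rightarrow> bool list \<Rightarrow> bool) \<Rightarrow> (nat \<Rightarrow> bool) \<Rightarrow> bool list \<Rightarrow> bool" where
  "gc k a c x = odd (card ({i. 1 \<le> i \<and> i \<le> k - 1 \<and> c i \<and> a i x} \<union> {i. i = k \<and> a k x}))"

end

theory Submission
  imports Defs "HOL-Computational_Algebra.Polynomial_Factorial"
begin

abbreviation ci :: "int poly \<Rightarrow> complex poly" where "ci \<equiv> map_poly of_int"

lemma ci_add [simp]: "ci (p + q) = ci p + ci q"
  by (intro poly_eqI) (simp add: coeff_map_poly)
lemma ci_diff [simp]: "ci (p - q) = ci p - ci q"
  by (intro poly_eqI) (simp add: coeff_map_poly)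
lemma ci_uminus [simp]: "ci (- p) = - ci p"
  by (intro poly_eqI) (simp add: coeff_map_poly)
lemma ci_mult [simp]: "ci (p * q) = ci p * ci q"
  by (intro poly_eqI) (simp add: coeff_map_poly coeff_mult)
lemma ci_pCons [simp]: "ci (pCons a p) = pCons (of_int a) (ci p)"
  by (simp add: map_poly_pCons)
lemma ci_one [simp]: "ci 1 = 1" by simp
lemma ci_power [simp]: "ci (p ^ n) = ci p ^ n"
  by (induction n) simp_all
lemma ci_smult [simp]: "ci (smult c p) = smult (of_int c) (ci p)"
  by (intro poly_eqI) (simp add: coeff_map_poly)
lemma ci_monom [simp]: "ci (monom c n) = monom (of_int c) n"
  by (simp add: map_poly_monom)
lemma ci_sum [simp]: "ci (sum f A) = (\<Sum>x\<in>A. ci (f x))"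
  by (induction A rule: infinite_finite_induct) simp_all

lemma ev_pcompose: "poly (ci (pcompose p q)) x = poly (ci p) (poly (ci q) x)"
  by (induction p rule: pCons_induct) (simp_all add: pcompose_pCons)

lemma binom_even:
  assumes "0 < j" "j < 2^r"
  shows "even (((2::nat)^r) choose j)"
proof (rule ccontr)
  assume od: "odd (2^r choose j)"
  have "j * (2^r choose j) = 2^r * ((2^r - 1) choose (j - 1))"
    using times_binomial_minus1_eq assms(1) by blast
  hence d: "2^r dvd j * (2^r choose j)" by simp
  have "coprime ((2::nat)^r) (2^r choose j)" using od by simp
  hence "2^r dvd j" using d by (simp add: coprime_dvd_mult_left_iff)
  with assms show False by (auto dest: dvd_imp_le)
qed

lemma coeff_H:
  fixes r :: nat
  shows "coeff ([:1,1:]^(2^r) + 1 :: int poly) i =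
     (if i = 0 then 2 else if i \<le> 2^r then int ((2^r) choose i) else 0)"
proof -
  have "coeff ([:1,1:]^(2^r) :: int poly) i = (if i \<le> 2^r then int ((2^r) choose i) else 0)"
  proof (cases "i \<le> 2^r")
    case True thus ?thesis by (simp add: coeff_linear_poly_power)
  next
    case False
    have "degree ([:1,1:]^(2^r) :: int poly) = 2^r" by (simp add: degree_power_eq)
    with False show ?thesis by (simp add: coeff_eq_0)
  qed
  thus ?thesis by auto
qed

lemma eis_aux:
  fixes A B :: "int poly"
  assumes H: "[:1,1:]^(2^r) + 1 = A * B"
    and eA: "even (coeff A 0)" and oB: "odd (coeff B 0)"
  shows "degree B = 0"
proof -
  let ?H = "[:1,1:]^(2^r) + 1 :: int poly"
  have cH: "coeff ?H i = (if i = 0 then 2 else if i \<le> 2^r then int ((2^r) choose i) else 0)" for i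
    by (rule coeff_H)
  have degH: "degree ?H = 2^r"
  proof -
    have "degree ([:1,1:]^(2^r) :: int poly) = 2^r" by (simp add: degree_power_eq)
    moreover have "degree (1::int poly) < 2^r" by simp
    ultimately show ?thesis by (simp add: degree_add_eq_left)
  qed
  have Hnz: "?H \<noteq> 0"
  proof
    assume "?H = 0" hence "coeff ?H 0 = 0" by simp
    with cH[of 0] show False by simp
  qed
  hence Anz: "A \<noteq> 0" and Bnz: "B \<noteq> 0" using H by auto
  have "lead_coeff ?H = 1" using cH[of "2^r"] degH by simp
  hence "lead_coeff A * lead_coeff B = 1" using H by (simp add: lead_coeff_mult)
  hence oddlA: "odd (coeff A (degree A))"
    by (metis even_mult_iff odd_one)
  define i where "i = (LEAST i. odd (coeff A i))"
  have oi: "odd (coeff A i)" unfolding i_def using oddlA by (rule LeastI)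
  have ev: "\<And>j. j < i \<Longrightarrow> even (coeff A j)" unfolding i_def using not_less_Least by blast
  have ile: "i \<le> degree A" unfolding i_def using oddlA by (rule Least_le)
  have i0: "i \<noteq> 0"
  proof
    assume "i = 0" with oi eA show False by simp
  qed
  have "coeff (A * B) i = (\<Sum>j\<le>i. coeff A j * coeff B (i - j))" by (rule coeff_mult)
  also have "\<dots> = (\<Sum>j<i. coeff A j * coeff B (i - j)) + coeff A i * coeff B 0"
    by (simp add: lessThan_Suc_atMost[symmetric])
  finally have eq: "coeff (A * B) i = (\<Sum>j<i. coeff A j * coeff B (i - j)) + coeff A i * coeff B 0" .
  have "even (\<Sum>j<i. coeff A j * coeff B (i - j))"
    by (rule dvd_sum) (simp add: ev)
  moreover have "odd (coeff A i * coeff B 0)" using oi oB by simp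
  ultimately have oH: "odd (coeff ?H i)" using eq H by simp
  have "\<not> (i < 2^r)"
  proof
    assume lt: "i < 2^r"
    hence "coeff ?H i = int (2^r choose i)" using cH[of i] i0 by simp
    moreover have "even (2^r choose i)" using binom_even[of i r] lt i0 by simp
    ultimately have "even (coeff ?H i)" by simp
    from this oH show False by blast
  qed
  hence "degree A \<ge> 2^r" using ile by simp
  moreover have "degree ?H = degree A + degree B" using H Anz Bnz by (simp add: degree_mult_eq)
  ultimately show ?thesis using degH by simp
qed

definition FF :: "nat \<Rightarrow> int poly" where "FF m = [:0,1:]^m + 1"

lemma pcompose_pow: "pcompose (p ^ n) q = (pcompose p q) ^ n"
  by (induction n) (simp_all add: pcompose_1 pcompose_mult)

lemma FF_shift: "pcompose (FF m) [:1,1:] = [:1,1:]^m + 1"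
  by (simp add: FF_def pcompose_add pcompose_pow pcompose_1 pcompose_pCons)

lemma degree_FF: "m > 0 \<Longrightarrow> degree (FF m) = m"
proof -
  assume "m > 0"
  have "degree ([:0,1:]^m :: int poly) = m" by (simp add: degree_power_eq)
  moreover have "degree (1::int poly) < m" using \<open>m>0\<close> by simp
  ultimately show ?thesis unfolding FF_def by (simp add: degree_add_eq_left)
qed

lemma lead_FF: "lead_coeff (FF (2^r)) = 1"
proof -
  have "degree (FF (2^r)) = 2^r" by (simp add: degree_FF)
  hence "lead_coeff (FF (2^r)) = coeff (FF (2^r)) (2^r)" by (simp only:)
  also have "\<dots> = coeff ([:0,1:]^(2^r) + 1 :: int poly) (2^r)" by (simp only: FF_def)
  also have "\<dots> = 1" by (simp add: coeff_linear_poly_power)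
  finally show ?thesis .
qed

lemma FF_irreducible: "irreducible (FF (2^r))"
proof (rule irreducibleI)
  have dF: "degree (FF (2^r)) = 2^r" by (simp add: degree_FF)
  thus "FF (2^r) \<noteq> 0" by (metis degree_0 power_not_zero zero_neq_numeral)
  show "\<not> is_unit (FF (2^r))" using dF by (auto simp: is_unit_poly_iff)
next
  fix A B assume AB: "FF (2^r) = A * B"
  have H: "[:1,1:]^(2^r) + 1 = pcompose A [:1,1:] * pcompose B [:1,1:]"
    using FF_shift[of "2^r"] AB by (simp add: pcompose_mult)
  have c0: "coeff (pcompose A [:1,1:]) 0 * coeff (pcompose B [:1,1:]) 0 = 2"
    using coeff_H[of r 0] H by (simp add: coeff_mult_0)
  have "degree (pcompose A [:1,1:]) = 0 \<or> degree (pcompose B [:1,1:]) = 0"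
  proof (cases "even (coeff (pcompose A [:1,1:]) 0)")
    case True
    have "odd (coeff (pcompose B [:1,1:]) 0)"
    proof
      assume "even (coeff (pcompose B [:1,1:]) 0)"
      then obtain y where y: "coeff (pcompose B [:1,1:]) 0 = 2 * y" by blast
      obtain x where x: "coeff (pcompose A [:1,1:]) 0 = 2 * x" using True by blast
      have "2 * (2 * (x * y)) = 2 * (1::int)" using c0 x y by (simp add: algebra_simps)
      hence "2 * (x * y) = 1" by simp
      hence "even (1::int)" by (metis dvd_triv_left)
      thus False by simp
    qed
    thus ?thesis using eis_aux[OF H True] by simp
  next
    case False
    hence "even (coeff (pcompose B [:1,1:]) 0)" using c0
      by (metis even_mult_iff even_numeral)
    thus ?thesis using eis_aux[of r "pcompose B [:1,1:]" "pcompose A [:1,1:]"] H False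
      by (simp add: mult.commute)
  qed
  hence dd: "degree A = 0 \<or> degree B = 0" by (simp add: degree_pcompose)
  have "lead_coeff (FF (2^r)) = 1"
  proof -
    have "degree (FF (2^r)) = 2^r" by (simp add: degree_FF)
    hence "lead_coeff (FF (2^r)) = coeff (FF (2^r)) (2^r)" by (simp only:)
    also have "\<dots> = coeff ([:0,1:]^(2^r) + 1 :: int poly) (2^r)" by (simp only: FF_def)
    finally have "lead_coeff (FF (2^r)) = coeff ([:0,1:]^(2^r) + 1 :: int poly) (2^r)" .
    also have "\<dots> = 1" by (simp add: coeff_linear_poly_power)
    finally show ?thesis .
  qed
  hence l1: "lead_coeff A * lead_coeff B = 1" using AB by (simp add: lead_coeff_mult)
  show "is_unit A \<or> is_unit B"
  proof (cases "degree A = 0")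
    case True
    hence "A = [:lead_coeff A:]" by (metis degree_eq_zeroE coeff_pCons_0)
    moreover have "lead_coeff A dvd 1" using l1 by (metis dvd_triv_left)
    ultimately show ?thesis by (metis is_unit_const_poly_iff)
  next
    case False
    hence "degree B = 0" using dd by simp
    hence "B = [:lead_coeff B:]" by (metis degree_eq_zeroE coeff_pCons_0)
    moreover have "lead_coeff B dvd 1" using l1 by (metis dvd_triv_right)
    ultimately show ?thesis by (metis is_unit_const_poly_iff)
  qed
qed

lemma FF_prime: "prime_elem (FF (2^r))"
  by (rule irreducible_imp_prime_poly[OF FF_irreducible])

locale cyc = fixes k :: nat assumes k1: "1 < k"
begin

abbreviation "m \<equiv> (2::nat)^(k-1)"
abbreviation "q \<equiv> (2::nat)^k"
abbreviation "w \<equiv> zeta (2^k)"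
abbreviation "F \<equiv> FF m"

lemma q_eq: "q = 2 * m"
  using k1 by (metis Suc_diff_1 less_trans zero_less_one power_Suc)

lemma m_pos: "m > 0" by simp
lemma m_ge2: "m \<ge> 2"
proof -
  have "(2::nat)^1 \<le> 2^(k-1)" using k1 by (intro power_increasing) auto
  thus ?thesis by simp
qed

lemma w_pow: "w ^ j = cis (2 * pi * real j / real q)"
  unfolding zeta_def Complex.DeMoivre by (simp add: field_simps)

lemma w_m: "w ^ m = -1"
proof -
  have "2 * pi * real m / real q = pi" using q_eq by simp
  thus ?thesis by (simp add: w_pow)
qed

lemma w_q: "w ^ q = 1"
proof -
  have "w ^ q = w ^ (m * 2)" using q_eq by (simp add: mult.commute)
  also have "\<dots> = (w ^ m) ^ 2" by (rule power_mult)
  finally have "w ^ q = (w ^ m) ^ 2" .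
  thus ?thesis using w_m by simp
qed

lemma w_ne1: assumes "0 < j" "j < q" shows "w ^ j \<noteq> 1"
proof
  assume "w ^ j = 1"
  hence "cos (2 * pi * real j / real q) = 1" by (simp add: w_pow cis.sel(1)[symmetric] del: cis.sel)
  then obtain n :: int where n: "2 * pi * real j / real q = n * 2 * pi" by (auto simp: cos_one_2pi_int)
  hence "real j = n * real q" by (simp add: field_simps)
  hence "int j = n * int q" by (metis of_int_eq_iff of_int_mult of_int_of_nat_eq)
  moreover have "int j > 0" "int j < int q" using assms by auto
  ultimately show False
  proof (cases "n \<le> 0")
    case True
    hence "n * int q \<le> 0" by (simp add: mult_nonpos_nonneg)
    with \<open>int j = n * int q\<close> \<open>int j > 0\<close> show False by simp
  next
    case False
    hence "n * int q \<ge> 1 * int q" by (intro mult_right_mono) auto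
    with \<open>int j = n * int q\<close> \<open>int j < int q\<close> show False by simp
  qed
qed

lemma norm_w: "norm w = 1" by (simp add: zeta_def)
lemma w_nz: "w \<noteq> 0" using norm_w by auto

lemma cnj_w: "cnj w = w ^ (q - 1)"
proof -
  have "cnj w * w = 1" using norm_w by (metis complex_norm_square mult.commute of_real_1 power_one)
  moreover have "w ^ (q - 1) * w = 1" using w_q by (metis power_minus_mult zero_less_numeral zero_less_power)
  ultimately show ?thesis using w_nz by (metis mult_right_cancel)
qed

lemma cnj_w_pow: "cnj (w ^ t) = (w ^ t) ^ (q - 1)"
  by (simp add: cnj_w power_mult[symmetric] mult.commute)

lemma F_w_pow: assumes "odd t" shows "poly (ci F) (w ^ t) = 0"
proof -
  have "(w ^ t) ^ m = (w ^ m) ^ t" by (simp add: power_mult[symmetric] mult.commute)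
  also have "\<dots> = -1" using w_m assms by simp
  finally show ?thesis by (simp add: FF_def)
qed

lemma F_prime: "prime_elem F" by (rule FF_prime)
lemma degree_F: "degree F = m" by (simp add: degree_FF)
lemma F_nz: "F \<noteq> 0" using degree_F m_ge2 by (metis degree_0 not_numeral_le_zero)

lemma LI0: assumes "G \<noteq> 0" "poly (ci G) w = 0" shows "m \<le> degree G"
proof (rule ccontr)
  assume "\<not> m \<le> degree G"
  let ?P = "\<lambda>G. G \<noteq> 0 \<and> poly (ci G) w = 0"
  obtain G0 where G0: "?P G0" and min: "\<And>G'. ?P G' \<Longrightarrow> degree G0 \<le> degree G'"
    using ex_has_least_nat[of ?P G degree] assms by blast
  have ltm: "degree G0 < m" using min[of G] assms \<open>\<not> m \<le> degree G\<close> by auto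
  obtain Q R where QR: "pseudo_divmod F G0 = (Q, R)" by (cases "pseudo_divmod F G0") auto
  define c where "c = coeff G0 (degree G0) ^ (Suc (degree F) - degree G0)"
  have eq: "smult c F = G0 * Q + R" unfolding c_def by (rule pseudo_divmod(1)[OF _ QR]) (use G0 in auto)
  have Rd: "R = 0 \<or> degree R < degree G0" by (rule pseudo_divmod(2)[OF _ QR]) (use G0 in auto)
  have Fw: "poly (ci F) w = 0" using F_w_pow[of 1] by simp
  have "poly (ci R) w = 0"
  proof -
    have "ci R = smult (of_int c) (ci F) - ci G0 * ci Q" using eq
      by (metis add_diff_cancel_left' ci_add ci_mult ci_smult)
    thus ?thesis using Fw G0 by simp
  qed
  hence R0: "R = 0" using Rd min[of R] by fastforce
  have cnz: "c \<noteq> 0" unfolding c_def using G0 by simp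
  have "F dvd G0 * Q"
  proof -
    have "G0 * Q = F * [:c:]" using eq R0 by (simp add:  mult.commute)
    thus ?thesis by (metis dvd_triv_left)
  qed
  hence "F dvd G0 \<or> F dvd Q" using F_prime prime_elem_dvd_multD by blast
  thus False
  proof
    assume "F dvd G0"
    hence "degree F \<le> degree G0" using G0 by (simp add: dvd_imp_degree_le)
    with ltm degree_F show False by simp
  next
    assume "F dvd Q"
    then obtain Q' where Q': "Q = F * Q'" by blast
    have "smult c F = F * (G0 * Q')" using eq R0 Q' by (simp add: algebra_simps)
    hence "F * [:c:] = F * (G0 * Q')" by (simp add:  mult.commute)
    hence "[:c:] = G0 * Q'" using mult_left_cancel[OF F_nz] by blast
    hence "degree (G0 * Q') = 0" by (metis degree_pCons_0)
    moreover have "Q' \<noteq> 0" using \<open>[:c:] = G0 * Q'\<close> cnz by auto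
    ultimately have "degree G0 = 0" using G0 by (simp add: degree_mult_eq)
    then obtain g where "G0 = [:g:]" by (metis degree_eq_zeroE)
    with G0 show False by simp
  qed
qed

lemma LI: assumes "poly (ci G) w = 0" shows "F dvd G"
proof -
  obtain Q R where QR: "pseudo_divmod G F = (Q, R)" by (cases "pseudo_divmod G F") auto
  have lc: "coeff F (degree F) = 1"
    by (rule lead_FF)
  have eq: "G = F * Q + R" using pseudo_divmod(1)[OF F_nz QR] lc by simp
  have Rd: "R = 0 \<or> degree R < degree F" by (rule pseudo_divmod(2)[OF F_nz QR])
  have Fw: "poly (ci F) w = 0" using F_w_pow[of 1] by simp
  have "ci R = ci G - ci F * ci Q" using eq by (metis add_diff_cancel_left' ci_add ci_mult)
  hence "poly (ci R) w = 0" using Fw assms by simp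
  hence "R = 0" using Rd LI0[of R] degree_F by fastforce
  thus ?thesis using eq by simp
qed

lemma vanish_odd: assumes "poly (ci G) w = 0" "odd t" shows "poly (ci G) (w ^ t) = 0"
proof -
  obtain S where "G = F * S" using LI[OF assms(1)] by blast
  thus ?thesis using F_w_pow[OF assms(2)] by simp
qed

end

context cyc begin

definition inR :: "complex \<Rightarrow> bool" where "inR z \<longleftrightarrow> (\<exists>P. z = poly (ci P) w)"
definition dvdR :: "complex \<Rightarrow> complex \<Rightarrow> bool" where "dvdR a z \<longleftrightarrow> (\<exists>y. inR y \<and> z = a * y)"

lemma inR_add: "inR a \<Longrightarrow> inR b \<Longrightarrow> inR (a + b)"
  unfolding inR_def by (metis ci_add poly_add)
lemma inR_mult: "inR a \<Longrightarrow> inR b \<Longrightarrow> inR (a * b)"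
  unfolding inR_def by (metis ci_mult poly_mult)
lemma inR_int: "inR (of_int c)"
  unfolding inR_def by (rule exI[of _ "[:c:]"]) simp
lemma inR_0: "inR 0" using inR_int[of 0] by simp
lemma inR_1: "inR 1" using inR_int[of 1] by simp
lemma inR_neg: "inR a \<Longrightarrow> inR (- a)"
  using inR_mult[OF inR_int[of "-1"]] by simp
lemma inR_diff: "inR a \<Longrightarrow> inR b \<Longrightarrow> inR (a - b)"
  using inR_add inR_neg by (metis diff_conv_add_uminus)
lemma inR_w: "inR w"
  unfolding inR_def by (rule exI[of _ "[:0,1:]"]) simp
lemma inR_pow: "inR a \<Longrightarrow> inR (a ^ n)"
  by (induction n) (simp_all add: inR_1 inR_mult)
lemma inR_sum: "(\<And>x. x \<in> A \<Longrightarrow> inR (f x)) \<Longrightarrow> inR (sum f A)"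
  by (induction A rule: infinite_finite_induct) (simp_all add: inR_0 inR_add)

lemma inR_cnj: assumes "inR z" shows "inR (cnj z)"
proof -
  obtain P where P: "z = poly (ci P) w" using assms inR_def by blast
  have "map_poly cnj (ci P) = ci P" by (intro poly_eqI) (simp add: coeff_map_poly)
  hence "cnj z = poly (ci P) (cnj w)" using P by (metis poly_cnj)
  also have "\<dots> = poly (ci P) (poly (ci (monom 1 (q - 1))) w)"
    by (simp add: cnj_w poly_monom)
  also have "\<dots> = poly (ci (pcompose P (monom 1 (q - 1)))) w" by (simp add: ev_pcompose)
  finally show ?thesis unfolding inR_def by blast
qed

lemma inR_cnj_w: "inR (cnj w)" using inR_cnj[OF inR_w] .

lemma dvdR_mult: "dvdR a x \<Longrightarrow> dvdR b y \<Longrightarrow> dvdR (a * b) (x * y)"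
  unfolding dvdR_def by (metis inR_mult mult.assoc mult.left_commute)
lemma dvdR_pow: "dvdR a x \<Longrightarrow> dvdR (a ^ n) (x ^ n)"
  by (induction n) (auto simp: dvdR_def inR_1 intro: dvdR_mult[unfolded dvdR_def])
lemma dvdR_trans: "dvdR a b \<Longrightarrow> inR c \<Longrightarrow> dvdR a (b * c)"
  unfolding dvdR_def by (metis inR_mult mult.assoc)

abbreviation "pp \<equiv> 1 - w"

lemma w_m2: "w ^ (2 ^ (k - Suc 0)) = -1" using w_m by simp

lemma pp_nz: "pp \<noteq> 0"
proof -
  have "(2::nat)^1 \<le> 2^k" using k1 by (intro power_increasing) auto
  hence "1 < q" by simp
  thus ?thesis using w_ne1[of 1] by auto
qed

lemma pp_dvd_1w: "dvdR pp (1 - w ^ j)"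
  unfolding dvdR_def using one_diff_power_eq[of w j]
  by (intro exI[of _ "\<Sum>i<j. w^i"]) (auto intro!: inR_sum inR_pow inR_w)

lemma pp_pow_dvd: "i < k \<Longrightarrow> odd od \<Longrightarrow> dvdR (pp ^ (2^i)) (1 - w ^ (2^i * od))"
proof (induction i arbitrary: od)
  case 0 thus ?case using pp_dvd_1w by simp
next
  case (Suc i)
  have o2: "odd (od + 2^(k - 1 - i))"
  proof -
    have "k - 1 - i > 0" using Suc.prems by simp
    hence "even ((2::nat)^(k - 1 - i))" by simp
    thus ?thesis using Suc.prems by simp
  qed
  have e1: "dvdR (pp ^ (2^i)) (1 - w ^ (2^i * od))" using Suc by simp
  have e2: "dvdR (pp ^ (2^i)) (1 - w ^ (2^i * (od + 2^(k - 1 - i))))" using Suc.IH[OF _ o2] Suc.prems by simp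
  have "2^i * (od + 2^(k - 1 - i)) = 2^i * od + m"
  proof -
    have "(2::nat)^i * 2^(k - 1 - i) = 2^(i + (k - 1 - i))" by (simp add: power_add)
    also have "i + (k - 1 - i) = k - 1" using Suc.prems by simp
    finally show ?thesis by (simp add: algebra_simps)
  qed
  hence eqx: "1 - w ^ (2^i * (od + 2^(k - 1 - i))) = 1 + w ^ (2^i * od)"
    by (simp add: power_add w_m w_m2)
  have e2': "dvdR (pp ^ (2^i)) (1 + w ^ (2^i * od))" using e2 unfolding eqx .
  have "1 - w ^ (2^Suc i * od) = (1 - w ^ (2^i * od)) * (1 + w ^ (2^i * od))"
  proof -
    have "w ^ (2^Suc i * od) = (w ^ (2^i * od))^2" by (simp add: power_mult[symmetric] mult.commute mult.left_commute)
    thus ?thesis by (simp add: algebra_simps power2_eq_square)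
  qed
  moreover have "pp ^ (2^Suc i) = pp ^ (2^i) * pp ^ (2^i)"
  proof -
    have "(2::nat)^Suc i = 2^i + 2^i" by simp
    thus ?thesis by (simp only: power_add)
  qed
  ultimately show ?case using dvdR_mult[OF e1 e2'] by simp
qed

lemma pp_m_dvd_2: "dvdR (pp ^ m) 2"
proof -
  have "dvdR (pp ^ (2^(k-1))) (1 - w ^ (2^(k-1) * 1))" using pp_pow_dvd[of "k-1" 1] k1 by simp
  thus ?thesis using w_m by simp
qed

lemma two_dvd_pp_m: "\<exists>u. inR u \<and> pp ^ m = 2 * u"
proof -
  have "pp ^ m = (-w + 1) ^ m" by simp
  also have "\<dots> = (\<Sum>j\<le>m. of_nat (m choose j) * (-w)^j * 1 ^ (m - j))" by (rule binomial_ring)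
  also have "\<dots> = (\<Sum>j\<in>{0<..<m}. of_nat (m choose j) * (-w)^j) + (1 + (-w)^m)"
  proof -
    have "{..m} = insert 0 (insert m {0<..<m})" using m_pos by auto
    thus ?thesis using m_pos by (simp add: sum.insert)
  qed
  also have "(-w)^m = -1"
  proof -
    have "even m" using m_ge2 k1 by simp
    thus ?thesis using w_m by (simp add: power_minus_even)
  qed
  finally have eq: "pp ^ m = (\<Sum>j\<in>{0<..<m}. of_nat (m choose j) * (-w)^j)" by simp
  have "\<And>j. j \<in> {0<..<m} \<Longrightarrow> of_nat (m choose j) * (-w)^j = 2 * (of_nat ((m choose j) div 2) * (-w)^j)"
  proof -
    fix j assume "j \<in> {0<..<m}"
    hence "even (m choose j)" using binom_even[of j "k-1"] by auto
    hence "(m choose j) = 2 * ((m choose j) div 2)" by simp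
    hence "(of_nat (m choose j) :: complex) = 2 * of_nat ((m choose j) div 2)"
      by (metis of_nat_mult of_nat_numeral)
    thus "of_nat (m choose j) * (-w)^j = 2 * (of_nat ((m choose j) div 2) * (-w)^j)" by simp
  qed
  hence "(\<Sum>j\<in>{0<..<m}. of_nat (m choose j) * (-w)^j) = (\<Sum>j\<in>{0<..<m}. 2 * (of_nat ((m choose j) div 2) * (-w)^j))"
    by (rule sum.cong[OF refl])
  hence "pp ^ m = 2 * (\<Sum>j\<in>{0<..<m}. of_nat ((m choose j) div 2) * (-w)^j)"
    using eq by (simp only: sum_distrib_left)
  moreover have "inR (\<Sum>j\<in>{0<..<m}. of_nat ((m choose j) div 2) * (-w)^j)"
    by (intro inR_sum inR_mult inR_pow inR_neg inR_w) (metis inR_int of_int_of_nat_eq)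
  ultimately show ?thesis by blast
qed

lemma pp_dvd_2: "dvdR pp 2"
  using pp_dvd_1w[of m] w_m by simp

lemma residue: assumes "inR y" shows "dvdR pp y \<or> dvdR pp (y - 1)"
proof -
  obtain P where P: "y = poly (ci P) w" using assms inR_def by blast
  define S where "S = synthetic_div P 1"
  have eqP: "[:-1, 1:] * S + [:poly P 1:] = P" using synthetic_div_correct'[of 1 P] unfolding S_def by simp
  have "y = poly (ci ([:-1, 1:] * S + [:poly P 1:])) w" unfolding eqP by (rule P)
  also have "\<dots> = (w - 1) * poly (ci S) w + of_int (poly P 1)" by (simp add: algebra_simps)
  finally have yeq: "y = (w - 1) * poly (ci S) w + of_int (poly P 1)" .
  obtain t where t: "inR t" "2 = pp * t" using pp_dvd_2 dvdR_def by blast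
  let ?S = "poly (ci S) w"
  have iS: "inR ?S" unfolding inR_def by blast
  define b where "b = poly P 1 mod 2"
  have b1: "poly P 1 = 2 * (poly P 1 div 2) + b" unfolding b_def by simp
  have b2: "b = 0 \<or> b = 1" unfolding b_def by auto
  have "y - of_int b = pp * (- ?S + of_int (poly P 1 div 2) * t)"
  proof -
    have oi: "of_int (poly P 1) = (2::complex) * of_int (poly P 1 div 2) + of_int b"
      by (subst b1) simp
    have "y - of_int b = (w - 1) * ?S + ((2::complex) * of_int (poly P 1 div 2) + of_int b) - of_int b"
      by (simp only: yeq oi)
    also have "\<dots> = (w - 1) * ?S + 2 * of_int (poly P 1 div 2)" by simp
    also have "\<dots> = (w - 1) * ?S + (pp * t) * of_int (poly P 1 div 2)" by (simp only: t(2)[symmetric])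
    also have "\<dots> = pp * (- ?S + of_int (poly P 1 div 2) * t)" by (simp add: algebra_simps)
    finally show ?thesis .
  qed
  moreover have "inR (- ?S + of_int (poly P 1 div 2) * t)"
    by (intro inR_add inR_neg inR_mult iS inR_int t(1))
  ultimately have "dvdR pp (y - of_int b)" unfolding dvdR_def by blast
  thus ?thesis using b2 by auto
qed

lemma pp_ndvd_1: "\<not> dvdR pp 1"
proof
  assume "dvdR pp 1"
  then obtain Q where Q: "1 = pp * poly (ci Q) w" unfolding dvdR_def inR_def by blast
  let ?G = "1 - [:1, -1:] * Q"
  have "poly (ci ?G) w = 1 - pp * poly (ci Q) w" by (simp add: algebra_simps)
  hence "poly (ci ?G) w = 0" using Q by simp
  then obtain S where S: "?G = F * S" using LI by blast
  hence "poly ?G 1 = poly F 1 * poly S 1" by simp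
  moreover have "poly ?G 1 = 1" by simp
  moreover have "poly F 1 = 2" by (simp add: FF_def)
  ultimately have "1 = 2 * poly S 1" by simp
  hence "even (1::int)" by (metis dvd_triv_left)
  thus False by simp
qed

lemma pp_prime: assumes "inR a" "inR b" "dvdR pp (a * b)" shows "dvdR pp a \<or> dvdR pp b"
proof (rule ccontr)
  assume nd: "\<not> (dvdR pp a \<or> dvdR pp b)"
  have "dvdR pp (a - 1)" using residue[OF assms(1)] nd by blast
  then obtain a' where a': "inR a'" "a - 1 = pp * a'" unfolding dvdR_def by blast
  have "dvdR pp (b - 1)" using residue[OF assms(2)] nd by blast
  then obtain b' where b': "inR b'" "b - 1 = pp * b'" unfolding dvdR_def by blast
  obtain c where c: "inR c" "a * b = pp * c" using assms(3) dvdR_def by blast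
  define X where "X = a' + b' + pp * a' * b'"
  have ab: "a * b = 1 + pp * X"
  proof -
    have ha: "a = 1 + pp * a'" using a'(2) by (simp add: algebra_simps)
    have hb: "b = 1 + pp * b'" using b'(2) by (simp add: algebra_simps)
    have "a * b = (1 + pp * a') * (1 + pp * b')" by (subst ha, subst hb) (rule refl)
    also have "\<dots> = 1 + pp * X" unfolding X_def by (simp add: algebra_simps)
    finally show ?thesis .
  qed
  have "pp * (c - X) = pp * c - pp * X" by (simp add: algebra_simps)
  also have "\<dots> = 1" using ab c(2) by simp
  finally have "1 = pp * (c - X)" by simp
  moreover have "inR (c - X)"
    unfolding X_def by (intro inR_diff inR_add inR_mult a'(1) b'(1) c(1) inR_1 inR_w)
  ultimately have "dvdR pp 1" unfolding dvdR_def by blast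
  with pp_ndvd_1 show False by simp
qed

lemma cnj_w_mult: "cnj w * w = 1"
  by (simp add: zeta_def cis_cnj cis_mult)

lemma cnj_pp: "cnj pp = - cnj w * pp"
  using cnj_w_mult by (simp add: algebra_simps)

lemma pp_dvd_cnj: assumes "inR y" "dvdR pp (cnj y)" shows "dvdR pp y"
proof -
  obtain s where s: "inR s" "cnj y = pp * s" using assms dvdR_def by blast
  have "y = cnj (cnj y)" by simp
  also have "\<dots> = cnj pp * cnj s" using s(2) by simp
  also have "\<dots> = pp * ((- cnj w) * cnj s)" using cnj_pp by simp
  finally have "y = pp * ((- cnj w) * cnj s)" .
  moreover have "inR ((- cnj w) * cnj s)" using inR_mult[OF inR_neg[OF inR_cnj_w] inR_cnj[OF s(1)]] .
  ultimately show ?thesis unfolding dvdR_def by blast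
qed

lemma descent: "inR z \<Longrightarrow> dvdR (pp ^ (2 * j)) (z * cnj z) \<Longrightarrow> dvdR (pp ^ j) z"
proof (induction j)
  case 0 thus ?case unfolding dvdR_def by auto
next
  case (Suc j)
  obtain s where s: "inR s" "z * cnj z = pp ^ (2 * Suc j) * s" using Suc.prems dvdR_def by blast
  have ps: "pp ^ (2 * Suc j) * s = pp ^ (2*j) * (pp^2 * s)" by (simp add: algebra_simps power2_eq_square)
  have "inR (pp^2 * s)" by (intro inR_mult inR_pow inR_diff inR_1 inR_w s(1))
  hence "dvdR (pp ^ (2 * j)) (z * cnj z)" unfolding dvdR_def using s(2) ps by metis
  then obtain y where y: "inR y" "z = pp ^ j * y" using Suc.IH Suc.prems(1) dvdR_def by blast
  have cp: "cnj pp = (- cnj w) * pp" using cnj_pp by simp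
  have "cnj z = (cnj pp)^j * cnj y" using y(2) by simp
  also have "\<dots> = ((- cnj w) * pp)^j * cnj y" by (simp only: cp)
  also have "\<dots> = (- cnj w) ^ j * pp ^ j * cnj y" by (simp only: power_mult_distrib)
  finally have cz: "cnj z = (- cnj w) ^ j * pp ^ j * cnj y" .
  have p2: "pp ^ (2 * j) = pp ^ j * pp ^ j" by (simp add: mult_2 power_add)
  have "z * cnj z = (pp ^ j * y) * ((- cnj w) ^ j * pp ^ j * cnj y)" using y(2) cz by simp
  also have "\<dots> = (pp ^ j * pp ^ j) * ((- cnj w) ^ j * (y * cnj y))" by (simp only: ac_simps)
  finally have zz: "z * cnj z = (pp ^ j * pp ^ j) * ((- cnj w) ^ j * (y * cnj y))" .
  have "pp ^ (2*j) * ((- cnj w) ^ j * (y * cnj y)) = z * cnj z" by (simp only: zz p2)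
  also have "\<dots> = pp ^ (2 * j) * (pp^2 * s)" by (simp only: s(2) ps)
  finally have "pp ^ (2*j) * ((- cnj w) ^ j * (y * cnj y)) = pp ^ (2 * j) * (pp^2 * s)" .
  moreover have "pp ^ (2 * j) \<noteq> 0" using pp_nz by simp
  ultimately have e: "(- cnj w) ^ j * (y * cnj y) = pp^2 * s" using mult_left_cancel by blast
  have ww: "(-w) * (- cnj w) = 1" using cnj_w_mult by (simp add: mult.commute)
  have "(-w)^j * (- cnj w)^j = ((-w) * (- cnj w))^j" by (simp only: power_mult_distrib)
  also have "\<dots> = 1" using ww by simp
  finally have w1: "(-w)^j * (- cnj w)^j = 1" .
  have "y * cnj y = ((-w)^j * (- cnj w)^j) * (y * cnj y)" using w1 by simp
  also have "\<dots> = (-w)^j * ((- cnj w)^j * (y * cnj y))" by (simp only: mult.assoc)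
  also have "\<dots> = (-w)^j * (pp^2 * s)" using e by simp
  also have "\<dots> = pp * (pp * s * (-w)^j)" by (simp add: power2_eq_square ac_simps)
  finally have yy: "y * cnj y = pp * (pp * s * (-w)^j)" .
  have "inR (pp * s * (-w)^j)" by (intro inR_mult inR_pow inR_neg inR_diff inR_1 inR_w s(1))
  hence "dvdR pp (y * cnj y)" unfolding dvdR_def using yy by blast
  hence "dvdR pp y" using pp_prime[OF y(1) inR_cnj[OF y(1)]] pp_dvd_cnj[OF y(1)] by blast
  then obtain y' where y': "inR y'" "y = pp * y'" using dvdR_def by blast
  have "z = pp ^ Suc j * y'" using y(2) y'(2) by simp
  thus ?case using y'(1) unfolding dvdR_def by blast
qed

lemma claimA: assumes "inR z" "z * cnj z = 2 ^ (2 * h)" shows "\<exists>y. inR y \<and> z = 2 ^ h * y"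
proof -
  have "dvdR ((pp ^ m) ^ (2 * h)) (2 ^ (2 * h))" by (rule dvdR_pow[OF pp_m_dvd_2])
  hence "dvdR (pp ^ (2 * (h * m))) (z * cnj z)" using assms(2) by (simp add: power_mult[symmetric] ac_simps)
  hence "dvdR (pp ^ (h * m)) z" using descent assms(1) by blast
  then obtain y where y: "inR y" "z = pp ^ (h * m) * y" using dvdR_def by blast
  obtain u where u: "inR u" "pp ^ m = 2 * u" using two_dvd_pp_m by blast
  have "pp ^ (h * m) = (pp ^ m) ^ h" by (simp add: power_mult[symmetric] mult.commute)
  also have "\<dots> = 2 ^ h * u ^ h" using u(2) by (simp add: power_mult_distrib)
  finally have "z = 2 ^ h * (u ^ h * y)" using y(2) by simp
  moreover have "inR (u ^ h * y)" by (intro inR_mult inR_pow u(1) y(1))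
  ultimately show ?thesis by blast
qed

end

context cyc begin

lemma cnjP: "poly (ci P) (cnj x) = cnj (poly (ci P) x)"
proof -
  have e: "map_poly cnj (ci P) = ci P" by (intro poly_eqI) (simp add: coeff_map_poly)
  have "cnj (poly (ci P) x) = poly (map_poly cnj (ci P)) (cnj x)" by (rule poly_cnj)
  thus ?thesis unfolding e by simp
qed

lemma atMost_pred_eq: "0 < (n::nat) \<Longrightarrow> {..n - 1} = {..<n}" by auto

lemma poly_ci_sum: assumes "degree P < m" shows "poly (ci P) x = (\<Sum>j<m. of_int (coeff P j) * x^j)"
proof -
  have dP: "degree P \<le> m - 1" using assms by simp
  have eq: "(\<Sum>i\<le>m - 1. monom (coeff P i) i) = P" by (rule poly_as_sum_of_monoms'[OF dP])
  have "poly (ci P) x = poly (ci (\<Sum>i\<le>m - 1. monom (coeff P i) i)) x" by (simp only: eq)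
  also have "\<dots> = (\<Sum>i\<le>m - 1. of_int (coeff P i) * x^i)" by (simp only: ci_sum ci_monom poly_sum poly_monom)
  also have "{..m - 1} = {..<m}" by (rule atMost_pred_eq[OF m_pos])
  finally show ?thesis .
qed

lemma w_pow_mod: "w ^ n = w ^ (n mod q)"
proof -
  have "w ^ n = w ^ (q * (n div q) + n mod q)" by simp
  also have "\<dots> = (w ^ q) ^ (n div q) * w ^ (n mod q)" by (simp only: power_add power_mult)
  finally show ?thesis using w_q by simp
qed

lemma geo_odd: assumes "\<not> m dvd D" shows "(\<Sum>t<m. (w^D)^(2*t+1)) = 0"
proof -
  let ?y = "w^(2*D)"
  have nq: "\<not> q dvd 2 * D" using assms q_eq by simp
  have "?y = w ^ ((2*D) mod q)" by (rule w_pow_mod)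
  moreover have "0 < (2*D) mod q" using nq by (simp add: dvd_eq_mod_eq_0 gr0I)
  moreover have "(2*D) mod q < q" by simp
  ultimately have y1: "?y \<noteq> 1" using w_ne1 by simp
  have ym: "?y ^ m = 1"
  proof -
    have "?y ^ m = w ^ (2 * D * m)" by (simp only: power_mult)
    also have "w ^ (2 * D * m) = w ^ (q * D)" using q_eq by (simp add: ac_simps)
    also have "\<dots> = (w ^ q) ^ D" by (simp only: power_mult)
    finally show ?thesis using w_q by simp
  qed
  have "(\<Sum>t<m. (w^D)^(2*t+1)) = (\<Sum>t<m. w^D * ?y^t)"
  proof (rule sum.cong[OF refl])
    fix t
    have "(w^D)^(2*t+1) = ((w^D)^2)^t * (w^D)^1" by (simp only: power_add power_mult)
    also have "(w^D)^2 = ?y" by (simp only: power_mult[symmetric] mult.commute)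
    finally show "(w^D)^(2*t+1) = w^D * ?y^t" by simp
  qed
  also have "\<dots> = w^D * (\<Sum>t<m. ?y^t)" by (simp add: sum_distrib_left)
  also have "(\<Sum>t<m. ?y^t) = 0" using geometric_sum[OF y1, of m] ym by simp
  finally show ?thesis by simp
qed

lemma orth_eq: "(w^(2*t+1))^j * cnj (w^(2*t+1))^j = 1"
proof -
  have "cnj (w^(2*t+1)) = (cnj w)^(2*t+1)" by simp
  hence "(w^(2*t+1)) * cnj (w^(2*t+1)) = (w * cnj w)^(2*t+1)" by (simp only: power_mult_distrib)
  also have "w * cnj w = 1" using cnj_w_mult by (simp only: mult.commute)
  finally have "(w^(2*t+1)) * cnj (w^(2*t+1)) = 1" by simp
  hence "((w^(2*t+1)) * cnj (w^(2*t+1)))^j = 1" by simp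
  thus ?thesis by (simp only: power_mult_distrib)
qed

lemma abs_diff_lt: "a < M \<Longrightarrow> b < M \<Longrightarrow> \<bar>int a - int b\<bar> < int M" for a b M :: nat
  by auto

lemma orth_nd: assumes "j < m" "j' < m" "j \<noteq> j'" shows "\<not> m dvd (j + (q - 1) * j')"
proof
  define D where "D = j + (q - 1) * j'"
  assume "m dvd (j + (q - 1) * j')"
  hence "int m dvd int D" unfolding D_def by (simp only: int_dvd_int_iff)
  have q1: "int (q - 1) = int q - 1" by (simp add: of_nat_diff)
  have "int D = int j + int (q - 1) * int j'" unfolding D_def by simp
  also have "\<dots> = (int j - int j') + int q * int j'" unfolding q1 by (simp add: algebra_simps)
  finally have iD: "int j - int j' = int D - int q * int j'" by simp
  have "int m dvd int q * int j'" using q_eq by simp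
  hence "int m dvd (int j - int j')" unfolding iD using \<open>int m dvd int D\<close> by (rule dvd_diff[rotated])
  moreover have "int j - int j' \<noteq> 0" using assms(3) by simp
  ultimately have "\<bar>int m\<bar> \<le> \<bar>int j - int j'\<bar>" using dvd_imp_le_int by blast
  hence "int m \<le> \<bar>int j - int j'\<bar>" by (simp only: abs_of_nat)
  moreover have "\<bar>int j - int j'\<bar> < int m" by (rule abs_diff_lt[OF assms(1,2)])
  ultimately show False by linarith
qed

lemma orth_pow: "(w^(2*t+1))^j * cnj (w^(2*t+1))^j' = (w^(j + (q - 1) * j'))^(2*t+1)"
proof -
  have "(w^(2*t+1))^j * cnj (w^(2*t+1))^j' = (w^(2*t+1))^j * ((w^(2*t+1))^(q-1))^j'"
    by (simp only: cnj_w_pow)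
  also have "\<dots> = w^((2*t+1)*j) * w^((2*t+1)*(q-1)*j')" by (simp only: power_mult)
  also have "\<dots> = w^((2*t+1)*j + (2*t+1)*(q-1)*j')" by (simp only: power_add)
  also have "(2*t+1)*j + (2*t+1)*(q-1)*j' = (j + (q - 1) * j') * (2*t+1)" by (simp only: ring_distribs ac_simps)
  also have "w^((j + (q - 1) * j') * (2*t+1)) = (w^(j + (q - 1) * j'))^(2*t+1)" by (simp only: power_mult)
  finally show ?thesis .
qed

lemma orth: assumes "j < m" "j' < m"
  shows "(\<Sum>t<m. (w^(2*t+1))^j * cnj (w^(2*t+1))^j') = (if j = j' then of_nat m else 0)"
proof (cases "j = j'")
  case True
  thus ?thesis using orth_eq by simp
next
  case False
  have "(\<Sum>t<m. (w^(2*t+1))^j * cnj (w^(2*t+1))^j') = (\<Sum>t<m. (w^(j + (q - 1) * j'))^(2*t+1))"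
    by (simp only: orth_pow)
  also have "\<dots> = 0" by (rule geo_odd[OF orth_nd[OF assms False]])
  finally show ?thesis using False by simp
qed

lemma sum_delta_aux: "j \<in> S \<Longrightarrow> finite S \<Longrightarrow>
   (\<Sum>j'\<in>S. a * b j' * (if j = j' then M else 0)) = a * b j * (M :: complex)"
proof -
  assume "j \<in> S" "finite S"
  have "(\<Sum>j'\<in>S. a * b j' * (if j = j' then M else 0)) = (\<Sum>j'\<in>S. if j = j' then a * b j' * M else 0)"
    by (rule sum.cong) auto
  also have "\<dots> = a * b j * M" using \<open>j \<in> S\<close> \<open>finite S\<close> by (simp add: sum.delta)
  finally show ?thesis .
qed

lemma sum_sq_aux: "(\<Sum>j\<in>S. (of_int (f j) :: complex) * of_int (f j) * of_nat M) = of_nat M * of_int (\<Sum>j\<in>S. (f j)^2)"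
  by (simp add: sum_distrib_left power2_eq_square ac_simps)

lemma parseval:
  assumes deg: "degree P < m" and eq: "poly (ci P) w * cnj (poly (ci P) w) = of_int c"
  shows "(\<Sum>j<m. (coeff P j)^2) = c"
proof -
  define T where "T = P * pcompose P (monom 1 (q - 1))"
  have Tx: "poly (ci T) x = poly (ci P) x * poly (ci P) (x ^ (q - 1))" for x
  proof -
    have "poly (ci T) x = poly (ci P) x * poly (ci (pcompose P (monom 1 (q - 1)))) x"
      unfolding T_def by (simp only: ci_mult poly_mult)
    also have "poly (ci (pcompose P (monom 1 (q - 1)))) x = poly (ci P) (x ^ (q - 1))"
      by (simp only: ev_pcompose ci_monom poly_monom of_int_1 mult_1)
    finally show ?thesis .
  qed
  have Tc: "poly (ci (T - [:c:])) y = poly (ci T) y - of_int c" for y by simp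
  have "poly (ci (T - [:c:])) w = 0"
  proof -
    have "poly (ci T) w = poly (ci P) w * poly (ci P) (cnj w)" by (simp only: Tx cnj_w)
    also have "\<dots> = of_int c" by (simp only: cnjP eq)
    finally show ?thesis by (simp only: Tc) simp
  qed
  hence van: "poly (ci (T - [:c:])) (w ^ t) = 0" if "odd t" for t using vanish_odd that by blast
  have tt: "poly (ci P) (w^t) * cnj (poly (ci P) (w^t)) = of_int c" if "odd t" for t
  proof -
    have "poly (ci P) (w^t) * cnj (poly (ci P) (w^t)) = poly (ci T) (w^t)"
      by (simp only: Tx cnj_w_pow[symmetric] cnjP)
    also have "\<dots> = of_int c" using van[OF that] by (simp only: Tc) simp
    finally show ?thesis .
  qed
  let ?c = "\<lambda>j. (of_int (coeff P j) :: complex)"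
  let ?x = "\<lambda>t. w^(2*t+1)"
  have "(\<Sum>t<m. poly (ci P) (?x t) * cnj (poly (ci P) (?x t))) = (\<Sum>t<m. (of_int c :: complex))"
    by (rule sum.cong[OF refl]) (rule tt, simp)
  hence "of_nat m * of_int c = (\<Sum>t<m. poly (ci P) (?x t) * cnj (poly (ci P) (?x t)))"
    by simp
  also have "\<dots> = (\<Sum>t<m. \<Sum>j<m. \<Sum>j'<m. ?c j * ?c j' * ((?x t)^j * cnj (?x t)^j'))"
  proof (rule sum.cong[OF refl])
    fix t
    have "poly (ci P) (?x t) * cnj (poly (ci P) (?x t)) =
       (\<Sum>j<m. ?c j * (?x t)^j) * (\<Sum>j'<m. ?c j' * cnj (?x t)^j')"
      unfolding cnjP[symmetric] by (simp only: poly_ci_sum[OF deg])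
    also have "\<dots> = (\<Sum>j<m. \<Sum>j'<m. ?c j * ?c j' * ((?x t)^j * cnj (?x t)^j'))"
      by (simp only: sum_product ac_simps)
    finally show "poly (ci P) (?x t) * cnj (poly (ci P) (?x t)) =
       (\<Sum>j<m. \<Sum>j'<m. ?c j * ?c j' * ((?x t)^j * cnj (?x t)^j'))" .
  qed
  also have "\<dots> = (\<Sum>j<m. \<Sum>t<m. \<Sum>j'<m. ?c j * ?c j' * ((?x t)^j * cnj (?x t)^j'))"
    by (rule sum.swap)
  also have "\<dots> = (\<Sum>j<m. \<Sum>j'<m. \<Sum>t<m. ?c j * ?c j' * ((?x t)^j * cnj (?x t)^j'))"
    by (rule sum.cong[OF refl], rule sum.swap)
  also have "\<dots> = (\<Sum>j<m. \<Sum>j'<m. ?c j * ?c j' * (\<Sum>t<m. (?x t)^j * cnj (?x t)^j'))"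
    by (simp only: sum_distrib_left)
  also have "\<dots> = (\<Sum>j<m. \<Sum>j'<m. ?c j * ?c j' * (if j = j' then of_nat m else 0))"
  proof (rule sum.cong[OF refl], rule sum.cong[OF refl])
    fix j j' assume "j \<in> {..<m}" "j' \<in> {..<m}"
    hence "(\<Sum>t<m. (?x t)^j * cnj (?x t)^j') = (if j = j' then of_nat m else 0)" by (intro orth) auto
    thus "?c j * ?c j' * (\<Sum>t<m. (?x t)^j * cnj (?x t)^j') = ?c j * ?c j' * (if j = j' then of_nat m else 0)"
      by (simp only:)
  qed
  also have "\<dots> = (\<Sum>j<m. ?c j * ?c j * of_nat m)"
    by (rule sum.cong[OF refl], rule sum_delta_aux) auto
  also have "\<dots> = of_nat m * of_int (\<Sum>j<m. (coeff P j)^2)"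
    by (rule sum_sq_aux)
  finally have "of_nat m * of_int c = (of_nat m * of_int (\<Sum>j<m. (coeff P j)^2) :: complex)" .
  hence "(of_int c :: complex) = of_int (\<Sum>j<m. (coeff P j)^2)" using m_pos by simp
  thus ?thesis by (simp only: of_int_eq_iff)
qed

lemma F_dvd_small: assumes "F dvd X" "X = 0 \<or> degree X < m" shows "X = 0"
proof (rule ccontr)
  assume "X \<noteq> 0"
  hence "degree F \<le> degree X" using assms(1) by (rule dvd_imp_degree_le[rotated])
  thus False using assms(2) \<open>X \<noteq> 0\<close> degree_F by simp
qed

lemma coeffs_div:
  assumes deg: "degree P < m" and eq: "poly (ci P) w * cnj (poly (ci P) w) = 2 ^ (2 * h)"
  shows "2^h dvd coeff P j"
proof -
  have "inR (poly (ci P) w)" unfolding inR_def by blast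
  then obtain y where y: "inR y" "poly (ci P) w = 2^h * y" using claimA eq by blast
  obtain Q where Q: "y = poly (ci Q) w" using y(1) inR_def by blast
  have "poly (ci (P - smult (2^h) Q)) w = poly (ci P) w - 2^h * poly (ci Q) w" by simp
  also have "\<dots> = 0" using y(2) Q by simp
  finally obtain S where S: "P - smult (2^h) Q = F * S" using LI by blast
  obtain Q1 Q2 where QR: "pseudo_divmod Q F = (Q1, Q2)" by (cases "pseudo_divmod Q F") auto
  have lc: "coeff F (degree F) = 1" by (rule lead_FF)
  have "smult (coeff F (degree F) ^ (Suc (degree Q) - degree F)) Q = F * Q1 + Q2"
    by (rule pseudo_divmod(1)[OF F_nz QR])
  hence Qe: "Q = F * Q1 + Q2" unfolding lc by simp
  have Q2d: "Q2 = 0 \<or> degree Q2 < m" using pseudo_divmod(2)[OF F_nz QR] degree_F by simp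
  have "P - smult (2^h) Q2 = (P - smult (2^h) Q) + smult (2^h) (F * Q1)"
    unfolding Qe by (simp add: algebra_simps smult_add_right)
  also have "\<dots> = F * S + F * smult (2^h) Q1" unfolding S by simp
  also have "\<dots> = F * (S + smult (2^h) Q1)" by (simp add: algebra_simps)
  finally have dv: "F dvd P - smult (2^h) Q2" by (rule dvdI)
  have "degree (P - smult (2^h) Q2) < m"
  proof (rule degree_diff_less[OF deg])
    show "degree (smult (2^h) Q2) < m" using Q2d m_pos by (auto simp: degree_smult_le le_less_trans)
  qed
  hence "P - smult (2^h) Q2 = 0" using F_dvd_small[OF dv] by blast
  hence "P = smult (2^h) Q2" by simp
  hence "coeff P j = 2^h * coeff Q2 j" by simp
  thus ?thesis by simp
qed

end

lemma sumbits_lt: "(\<Sum>i<K. 2^i * (if b i then 1 else 0)) < (2::nat)^K"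
proof (induction K)
  case 0 thus ?case by simp
next
  case (Suc K)
  have "(\<Sum>i<Suc K. (2::nat)^i * (if b i then 1 else 0)) = (\<Sum>i<K. 2^i * (if b i then 1 else 0)) + 2^K * (if b K then 1 else 0)"
    by simp
  also have "\<dots> < 2^K + 2^K" using Suc by (intro add_less_le_mono) auto
  finally show ?case by simp
qed

lemma sumbits_bit: "odd ((\<Sum>i<K. 2^i * (if b i then 1 else 0)) div (2::nat)^j) \<longleftrightarrow> (j < K \<and> b j)"
proof (induction K)
  case 0 thus ?case by simp
next
  case (Suc K)
  define S where "S = (\<Sum>i<K. 2^i * (if b i then 1 else (0::nat)))"
  define \<beta> where "\<beta> = (if b K then 1 else (0::nat))"
  have S': "(\<Sum>i<Suc K. 2^i * (if b i then 1 else 0)) = S + 2^K * \<beta>" unfolding S_def \<beta>_def by simp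
  have Slt: "S < 2^K" unfolding S_def by (rule sumbits_lt)
  show ?case
  proof (cases "j < K")
    case True
    have "(2::nat)^K = 2^j * 2^(K - j)" using True by (simp add: power_add[symmetric])
    hence eqS: "S + 2^K * \<beta> = S + 2^j * (2^(K - j) * \<beta>)" by simp
    have "(S + 2^K * \<beta>) div 2^j = (S + 2^j * (2^(K - j) * \<beta>)) div 2^j" by (simp only: eqS)
    also have "\<dots> = 2^(K - j) * \<beta> + S div 2^j" by (rule div_mult_self2) simp
    finally have "(S + 2^K * \<beta>) div 2^j = 2^(K - j) * \<beta> + S div 2^j" .
    moreover have "even ((2::nat)^(K - j) * \<beta>)" using True by simp
    ultimately have "odd ((S + 2^K * \<beta>) div 2^j) \<longleftrightarrow> odd (S div 2^j)" by simp
    thus ?thesis using Suc.IH True unfolding S' S_def by simp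
  next
    case False
    show ?thesis
    proof (cases "j = K")
      case True
      have "(S + 2^K * \<beta>) div 2^K = \<beta> + S div 2^K" by (simp add: div_mult_self2)
      also have "S div 2^K = 0" using Slt by simp
      finally show ?thesis unfolding S' using True by (simp add: \<beta>_def)
    next
      case False
      hence "K < j" using \<open>\<not> j < K\<close> by simp
      have "S + 2^K * \<beta> < 2^K + 2^K" using Slt by (intro add_less_le_mono) (auto simp: \<beta>_def)
      also have "(2::nat)^K + 2^K = 2^Suc K" by simp
      also have "\<dots> \<le> 2^j" using \<open>K < j\<close> by (intro power_increasing) auto
      finally have "(S + 2^K * \<beta>) div 2^j = 0" by simp
      thus ?thesis unfolding S' using \<open>K < j\<close> by simp
    qed
  qed
qed

lemma sq1:
  fixes d :: "nat \<Rightarrow> int"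
  assumes "finite S" "(\<Sum>j\<in>S. (d j)^2) = 1"
  shows "\<exists>j0\<in>S. (d j0)^2 = 1 \<and> (\<forall>j\<in>S. j \<noteq> j0 \<longrightarrow> d j = 0)"
proof -
  have "\<exists>j0\<in>S. d j0 \<noteq> 0"
  proof (rule ccontr)
    assume "\<not> (\<exists>j0\<in>S. d j0 \<noteq> 0)"
    hence "(\<Sum>j\<in>S. (d j)^2) = 0" by simp
    with assms show False by simp
  qed
  then obtain j0 where j0: "j0 \<in> S" "d j0 \<noteq> 0" by blast
  have sp: "(\<Sum>j\<in>S. (d j)^2) = (d j0)^2 + (\<Sum>j\<in>S - {j0}. (d j)^2)"
    using assms(1) j0(1) by (simp add: sum.remove)
  have r0: "(\<Sum>j\<in>S - {j0}. (d j)^2) \<ge> 0" by (simp add: sum_nonneg)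
  have "0 < (d j0)^2" using j0(2) by simp
  hence g1: "(d j0)^2 \<ge> 1" by (simp only: int_one_le_iff_zero_less)
  have e1: "(d j0)^2 = 1" using sp assms(2) r0 g1 by linarith
  have "(\<Sum>j\<in>S - {j0}. (d j)^2) = 0" using sp assms(2) e1 by linarith
  hence "\<forall>j\<in>S - {j0}. (d j)^2 = 0" using assms(1) by (simp add: sum_nonneg_eq_0_iff)
  hence "\<forall>j\<in>S. j \<noteq> j0 \<longrightarrow> d j = 0" by simp
  thus ?thesis using j0(1) e1 by blast
qed

lemma regroup:
  fixes e :: "'x \<Rightarrow> int" and r :: "'x \<Rightarrow> nat" and g :: "nat \<Rightarrow> int"
  assumes "finite X" "\<And>x. x \<in> X \<Longrightarrow> r x < M"
  shows "(\<Sum>j<M. coeff (\<Sum>x\<in>X. monom (e x) (r x)) j * g j) = (\<Sum>x\<in>X. e x * g (r x))"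
proof -
  have "(\<Sum>j<M. coeff (\<Sum>x\<in>X. monom (e x) (r x)) j * g j) = (\<Sum>j<M. \<Sum>x\<in>X. (if r x = j then e x * g j else 0))"
  proof (rule sum.cong[OF refl])
    fix j
    have "coeff (\<Sum>x\<in>X. monom (e x) (r x)) j * g j = (\<Sum>x\<in>X. (if r x = j then e x else 0) * g j)"
      by (simp add: coeff_sum coeff_monom sum_distrib_right)
    also have "\<dots> = (\<Sum>x\<in>X. (if r x = j then e x * g j else 0))" by (rule sum.cong) auto
    finally show "coeff (\<Sum>x\<in>X. monom (e x) (r x)) j * g j = (\<Sum>x\<in>X. (if r x = j then e x * g j else 0))" .
  qed
  also have "\<dots> = (\<Sum>x\<in>X. \<Sum>j<M. (if r x = j then e x * g j else 0))" by (rule sum.swap)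
  also have "\<dots> = (\<Sum>x\<in>X. e x * g (r x))"
  proof (rule sum.cong[OF refl])
    fix x assume "x \<in> X"
    hence "r x \<in> {..<M}" using assms(2) by simp
    thus "(\<Sum>j<M. (if r x = j then e x * g j else 0)) = e x * g (r x)"
      by (simp add: sum.delta)
  qed
  finally show ?thesis .
qed


theorem mainTheorem13:
  fixes n k :: nat and a :: "nat \<Rightarrow> bool list \<Rightarrow> bool"
  assumes "even n" and "k > 1"
    and "gbent n (2 ^ k) (gfun k a)"
  shows "\<forall>c :: nat \<Rightarrow> bool. bent n (gc k a c)"
proof
  fix c :: "nat \<Rightarrow> bool"
  interpret cyc k using assms(2) by unfold_locales
  obtain h where hn: "n = 2 * h" using assms(1) by (auto elim: evenE)
  have pw: "2 powr (real n / 2) = (2::real)^h" using hn by (simp add: powr_realpow)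
  show "bent n (gc k a c)" unfolding bent_def
  proof
    fix u assume u: "u \<in> vecs n"
    define r where "r x = (\<Sum>i<k-1. 2^i * (if a (Suc i) x then 1 else (0::nat)))" for x
    define e where "e x = (if a k x \<noteq> dotp u x then -1 else (1::int))" for x
    define P where "P = (\<Sum>x\<in>vecs n. monom (e x) (r x))"
    have fin: "finite (vecs n)" unfolding vecs_def using finite_lists_length_eq[of "UNIV::bool set" n] by simp
    have rlt: "r x < m" for x unfolding r_def by (rule sumbits_lt)
    have gf: "gfun k a x = r x + m * (if a k x then 1 else 0)" for x
    proof -
      have k1': "k = Suc (k - 1)" using assms(2) by simp
      have "gfun k a x = (\<Sum>i<k. 2^i * (if a (Suc i) x then 1 else 0))"
        unfolding gfun_def by (simp add: sum.atLeast1_atMost_eq)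
      also have "\<dots> = (\<Sum>i<Suc (k-1). 2^i * (if a (Suc i) x then 1 else 0))" using k1' by simp
      also have "\<dots> = r x + 2^(k-1) * (if a (Suc (k-1)) x then 1 else 0)" unfolding r_def by simp
      finally show ?thesis using k1' by simp
    qed
    have gq: "gfun k a x mod q = gfun k a x" for x
    proof -
      have "gfun k a x < m + m" using gf[of x] rlt[of x] by (cases "a k x") auto
      thus ?thesis using q_eq by simp
    qed
    have zt: "zeta q ^ (gfun k a x mod q) * sgn2 (dotp u x) = of_int (e x) * w ^ (r x)" for x
    proof -
      have "zeta q ^ (gfun k a x mod q) = w ^ (r x) * (w ^ m) ^ (if a k x then 1 else 0)"
        unfolding gq by (simp only: gf power_add power_mult)
      thus ?thesis by (cases "a k x"; cases "dotp u x") (simp_all add: w_m w_m2 e_def sgn2_def)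
    qed
    have zP: "gwht n q (gfun k a) u = poly (ci P) w"
      unfolding gwht_def P_def by (simp add: poly_sum poly_monom zt)
    have cP: "coeff P j = (\<Sum>x\<in>vecs n. if r x = j then e x else 0)" for j
      unfolding P_def by (simp add: coeff_sum coeff_monom)
    have degP: "degree P < m"
    proof -
      have "degree P \<le> m - 1"
      proof (rule degree_le, intro allI impI)
        fix j assume "m - 1 < j"
        have "r x \<noteq> j" for x
        proof -
          have "r x < m" by (rule rlt)
          thus ?thesis using \<open>m - 1 < j\<close> by arith
        qed
        thus "coeff P j = 0" unfolding cP by simp
      qed
      thus ?thesis using m_pos by arith
    qed
    have "cmod (gwht n q (gfun k a) u) = 2 powr (real n / 2)" using assms(3) u unfolding gbent_def by blast
    hence nz: "cmod (poly (ci P) w) = 2^h" unfolding zP pw .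
    have zz: "poly (ci P) w * cnj (poly (ci P) w) = 2^(2*h)"
    proof -
      have "poly (ci P) w * cnj (poly (ci P) w) = of_real ((cmod (poly (ci P) w))^2)"
        by (rule complex_norm_square[symmetric])
      also have "\<dots> = of_real (((2::real)^h)^2)" by (simp only: nz)
      also have "\<dots> = 2^(2*h)" by (simp only: power_even_eq of_real_power of_real_numeral)
      finally show ?thesis .
    qed
    have dv: "2^h dvd coeff P j" for j by (rule coeffs_div[OF degP zz])
    have ps: "(\<Sum>j<m. (coeff P j)^2) = 2^(2*h)"
      using parseval[OF degP, of "2^(2*h)"] zz by simp
    define d where "d j = coeff P j div 2^h" for j
    have cd: "coeff P j = 2^h * d j" for j using dv[of j] by (simp add: d_def)
    have "(2::int)^(2*h) * (\<Sum>j<m. (d j)^2) = 2^(2*h) * 1"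
    proof -
      have "(2::int)^(2*h) * (\<Sum>j<m. (d j)^2) = (\<Sum>j<m. (coeff P j)^2)"
      proof -
        have f4: "((2::int)^h)^2 = 2^(2*h)" by (simp only: power_even_eq)
        show ?thesis by (simp only: cd sum_distrib_left power_mult_distrib f4)
      qed
      thus ?thesis using ps by simp
    qed
    hence d1: "(\<Sum>j<m. (d j)^2) = 1" by simp
    obtain j0 where j0: "j0 \<in> {..<m}" "(d j0)^2 = 1" "\<And>j. j \<in> {..<m} \<Longrightarrow> j \<noteq> j0 \<Longrightarrow> d j = 0"
      using sq1[OF _ d1] by auto
    define chi where "chi j = (if even (card {i. 1 \<le> i \<and> i \<le> k - 1 \<and> c i \<and> odd (j div 2^(i-1))}) then 1 else (-1::int))" for j :: nat
    have wx: "sgn2 (gc k a c x \<noteq> dotp u x) = of_int (e x * chi (r x))" for x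
    proof -
      define A where "A = {i. 1 \<le> i \<and> i \<le> k - 1 \<and> c i \<and> a i x}"
      define B where "B = {i. i = k \<and> a k x}"
      have AA: "A = {i. 1 \<le> i \<and> i \<le> k - 1 \<and> c i \<and> odd (r x div 2^(i-1))}"
      proof -
        have "odd (r x div 2^(i-1)) \<longleftrightarrow> a i x" if "1 \<le> i" "i \<le> k - 1" for i
        proof -
          have "odd (r x div 2^(i-1)) \<longleftrightarrow> (i - 1 < k - 1 \<and> a (Suc (i - 1)) x)"
            unfolding r_def by (rule sumbits_bit)
          moreover have "i - 1 < k - 1" using that assms(2) by arith
          ultimately show ?thesis using that by simp
        qed
        thus ?thesis unfolding A_def by blast
      qed
      have finA: "finite A" unfolding A_def by (rule finite_subset[of _ "{..k}"]) auto
      have finB: "finite B" unfolding B_def by (rule finite_subset[of _ "{k}"]) auto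
      have disj: "A \<inter> B = {}" unfolding A_def B_def using assms(2) by auto
      have cB: "card B = (if a k x then 1 else 0)" unfolding B_def by auto
      have gcx: "gc k a c x = odd (card A + (if a k x then 1 else 0))"
        unfolding gc_def A_def[symmetric] B_def[symmetric] using card_Un_disjoint[OF finA finB disj] cB by simp
      have chi: "chi (r x) = (if even (card A) then 1 else -1)" unfolding chi_def AA by simp
      show ?thesis unfolding gcx chi e_def sgn2_def by auto
    qed
    have W: "wht n (gc k a c) u = of_int (\<Sum>j<m. coeff P j * chi j)"
    proof -
      have "wht n (gc k a c) u = (\<Sum>x\<in>vecs n. of_int (e x * chi (r x)))" unfolding wht_def by (rule sum.cong[OF refl], rule wx)
      also have "\<dots> = of_int (\<Sum>x\<in>vecs n. e x * chi (r x))" by simp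
      also have "(\<Sum>x\<in>vecs n. e x * chi (r x)) = (\<Sum>j<m. coeff P j * chi j)"
        unfolding P_def by (rule regroup[symmetric, OF fin rlt])
      finally show ?thesis .
    qed
    have "(\<Sum>j<m. coeff P j * chi j) = coeff P j0 * chi j0 + (\<Sum>j\<in>{..<m} - {j0}. coeff P j * chi j)"
      using j0(1) by (simp add: sum.remove)
    also have "(\<Sum>j\<in>{..<m} - {j0}. coeff P j * chi j) = 0"
      using j0(3) by (intro sum.neutral) (auto simp: cd)
    finally have sW: "(\<Sum>j<m. coeff P j * chi j) = 2^h * d j0 * chi j0" by (simp add: cd)
    have ad: "\<bar>d j0\<bar> = 1" using j0(2) by (auto simp: power2_eq_1_iff)
    have ac: "\<bar>chi j0\<bar> = 1" unfolding chi_def by simp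
    have i2: "\<bar>(2::int)^h * d j0 * chi j0\<bar> = 2^h" using ad ac by (simp add: abs_mult)
    have "cmod (wht n (gc k a c) u) = cmod (of_int (2^h * d j0 * chi j0) :: complex)"
      unfolding W sW ..
    also have "\<dots> = \<bar>of_int (2^h * d j0 * chi j0)\<bar>" by (rule norm_of_int)
    also have "\<dots> = of_int \<bar>2^h * d j0 * chi j0\<bar>" by (simp only: of_int_abs)
    also have "\<dots> = 2^h" unfolding i2 by simp
    finally show "cmod (wht n (gc k a c) u) = 2 powr (real n / 2)" using pw by simp
  qed
qed

end
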